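(* Let $m>1$, $\chi>0$, $\alpha>0$, and let $p\ge2$ be an integer. (a) If $\chi>C_p$, then neither $\mathcal F^p_m$ nor $\mathcal F^p_{m,\alpha}$ has a critical point in $\mathcal R^p$. (b) If $\chi<C_p$, then $\mathcal F^p_m$ has no critical point in $\mathcal R^p$. (c) If $\chi=C_p$, then $\mathcal F^p_{m,\alpha}$ has no critical point in $\mathcal R^p$.
   Context: $\mathcal R^p=\{X\in\mathbb R^p: X_1<\dots<X_p,\ \sum_iX_i=0\}$. $\mathcal F^p_{m,\alpha}(X)=\frac1{m-1}\sum_{i=1}^{p-1}(X_{i+1}-X_i)^{1-m}-\frac{\chi}{m-1}\sum_{1\le i\ne j\le p}|X_i-X_j|^{1-m}+\alpha\frac{|X|^2}{2}$, $\mathcal F^p_m=\mathcal F^p_{m,0}$. $C_p$ is defined by $\frac1{C_p}=\max_{X\in\mathcal R^p}\frac{\sum_{1\le i\ne j\le p}|X_j-X_i|^{1-m}}{\sum_{i=1}^{p-1}(X_{i+1}-X_i)^{1-m}}$. A critical point is a point of $\mathcal R^p$ where the Euclidean gradient vanishes. *)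

theory Defs
  imports "HOL-Analysis.Analysis"
begin

text \<open>Points of R^p are represented as functions X :: nat \<Rightarrow> real, of which only
  the coordinates X 1, ..., X p matter.\<close>

definition Rp :: "nat \<Rightarrow> (nat \<Rightarrow> real) set" where
  "Rp p = {X. (\<forall>i\<in>{1..<p}. X i < X (Suc i)) \<and> (\<Sum>i=1..p. X i) = 0}"

definition Fma :: "real \<Rightarrow> real \<Rightarrow> real \<Rightarrow> nat \<Rightarrow> (nat \<Rightarrow> real) \<Rightarrow> real" where
  "Fma m chi \<alpha> p X =
     1 / (m - 1) * (\<Sum>i=1..<p. (X (Suc i) - X i) powr (1 - m))
     - chi / (m - 1) * (\<Sum>i\<in>{1..p}. \<Sum>j\<in>{1..p} - {i}. \<bar>X i - X j\<bar> powr (1 - m))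
     + \<alpha> * (\<Sum>i=1..p. (X i)\<^sup>2) / 2"

definition critical_point :: "real \<Rightarrow> real \<Rightarrow> real \<Rightarrow> nat \<Rightarrow> (nat \<Rightarrow> real) \<Rightarrow> bool" where
  "critical_point m chi \<alpha> p X \<longleftrightarrow> X \<in> Rp p \<and>
     (\<forall>i\<in>{1..p}. ((\<lambda>t. Fma m chi \<alpha> p (X(i := t))) has_real_derivative 0) (at (X i)))"

definition Cp :: "real \<Rightarrow> nat \<Rightarrow> real" where
  "Cp m p = 1 / (SUP X\<in>Rp p.
      (\<Sum>i\<in>{1..p}. \<Sum>j\<in>{1..p} - {i}. \<bar>X j - X i\<bar> powr (1 - m))
      / (\<Sum>i=1..<p. (X (Suc i) - X i) powr (1 - m)))"

end

theory Submission
  imports Defs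
begin


definition E :: "real \<Rightarrow> real \<Rightarrow> real" where "E m u = (1-m) * (\<bar>u\<bar> powr (1-m)) / u"
definition dd :: "nat \<Rightarrow> nat \<Rightarrow> nat \<Rightarrow> real \<Rightarrow> real" where
  "dd a b k D = (if k = a then D else if k = b then -D else 0)"

lemma deriv_pos: "(u::real) > 0 \<Longrightarrow> ((\<lambda>u. u powr (1-m)) has_real_derivative E m u) (at u)"
proof -
  assume u: "u > 0"
  have "((\<lambda>u. u powr (1-m)) has_real_derivative (1-m) * u powr (1-m-1)) (at u)"
    by (rule has_real_derivative_powr[OF u, of "1-m"])
  moreover have "u powr (1-m-1) = u powr (1-m) / u" using u
    by (subst powr_diff) simp
  moreover have "(1-m) * (u powr (1-m) / u) = E m u" using u
    by (simp add: E_def)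
  ultimately show ?thesis by (simp only:)
qed

lemma deriv_abs: "(u::real) \<noteq> 0 \<Longrightarrow> ((\<lambda>u. \<bar>u\<bar> powr (1-m)) has_real_derivative E m u) (at u)"
proof -
  assume u: "u \<noteq> 0"
  show ?thesis
  proof (cases "u > 0")
    case True
    have ev: "eventually (\<lambda>x. \<bar>x\<bar> powr (1-m) = x powr (1-m)) (nhds u)"
    proof -
      have "eventually (\<lambda>x. x \<in> {0<..}) (nhds u)" using True by (intro eventually_nhds_in_open) auto
      then show ?thesis by eventually_elim simp
    qed
    show ?thesis
      by (subst DERIV_cong_ev[OF refl ev refl]) (rule deriv_pos[OF True])
  next
    case False
    then have neg: "u < 0" using u by simp
    have ev: "eventually (\<lambda>x. \<bar>x\<bar> powr (1-m) = (-x) powr (1-m)) (nhds u)"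
    proof -
      have "eventually (\<lambda>x. x \<in> {..<0}) (nhds u)" using neg by (intro eventually_nhds_in_open) auto
      then show ?thesis by eventually_elim simp
    qed
    have d: "((\<lambda>x. (-x) powr (1-m)) has_real_derivative E m (-u) * (-1)) (at u)"
      by (rule DERIV_chain2[where f="\<lambda>x. x powr (1-m)", OF deriv_pos]) (use neg in \<open>auto intro!: derivative_eq_intros\<close>)
    have "E m (-u) * (-1) = E m u" by (simp add: E_def)
    then show ?thesis
      using d by (subst DERIV_cong_ev[OF refl ev refl]) simp
  qed
qed

lemma pair_deriv:
  assumes "a \<noteq> b" "(\<phi> has_real_derivative D) (at (X a - X b))"
  shows "((\<lambda>t. \<phi> ((X(k:=t)) a - (X(k:=t)) b)) has_real_derivative dd a b k D) (at (X k))"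
proof -
  consider "k = a" | "k = b" | "k \<noteq> a \<and> k \<noteq> b" by blast
  then show ?thesis
  proof cases
    case 1
    have "((\<lambda>t. \<phi> (t - X b)) has_real_derivative D * 1) (at (X k))"
      by (rule DERIV_chain2[where f=\<phi>]) (use assms 1 in \<open>auto intro!: derivative_eq_intros\<close>)
    then show ?thesis using 1 assms(1) by (simp add: dd_def)
  next
    case 2
    have "((\<lambda>t. \<phi> (X a - t)) has_real_derivative D * (-1)) (at (X k))"
      by (rule DERIV_chain2[where f=\<phi>]) (use assms 2 in \<open>auto intro!: derivative_eq_intros\<close>)
    then show ?thesis using 2 assms(1) by (simp add: dd_def)
  next
    case 3
    then show ?thesis by (simp add: dd_def)
  qed
qed

lemma Rp_step: "X \<in> Rp p \<Longrightarrow> 1 \<le> i \<Longrightarrow> i < p \<Longrightarrow> X i < X (Suc i)"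
  unfolding Rp_def by simp

lemma Rp_strict:
  assumes X: "X \<in> Rp p" and i: "1 \<le> i" and ij: "i < j" and jp: "j \<le> p"
  shows "X i < X j"
proof -
  have "Suc i \<le> j" using ij by simp
  then have "j \<le> p \<longrightarrow> X i < X j"
  proof (induction j rule: dec_induct)
    case base
    show ?case using Rp_step[OF X i] by simp
  next
    case (step n)
    show ?case
    proof
      assume "Suc n \<le> p"
      then have "X n < X (Suc n)" using Rp_step[OF X, of n] step.hyps i by simp
      then show "X i < X (Suc n)" using step.IH \<open>Suc n \<le> p\<close> by simp
    qed
  qed
  then show ?thesis using jp by simp
qed

lemma Rp_neq:
  assumes "X \<in> Rp p" "i \<in> {1..p}" "j \<in> {1..p}" "i \<noteq> j"
  shows "X i \<noteq> X j"
proof (cases "i < j")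
  case True then show ?thesis using Rp_strict[OF assms(1), of i j] assms(2,3) by auto
next
  case False then have "j < i" using assms(4) by simp
  then show ?thesis using Rp_strict[OF assms(1), of j i] assms(2,3) by auto
qed

lemma Fma_deriv:
  assumes X: "X \<in> Rp p" and k: "k \<in> {1..p}"
  shows "((\<lambda>t. Fma m chi \<alpha> p (X(k:=t))) has_real_derivative
     (1/(m-1) * (\<Sum>i=1..<p. dd (Suc i) i k (E m (X (Suc i) - X i)))
      - chi/(m-1) * (\<Sum>i\<in>{1..p}. \<Sum>j\<in>{1..p}-{i}. dd i j k (E m (X i - X j)))
      + \<alpha> * X k)) (at (X k))"
proof -
  have hA: "((\<lambda>t. \<Sum>i=1..<p. ((X(k:=t)) (Suc i) - (X(k:=t)) i) powr (1-m)) has_real_derivative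
      (\<Sum>i=1..<p. dd (Suc i) i k (E m (X (Suc i) - X i)))) (at (X k))"
  proof (rule DERIV_sum)
    fix i assume i: "i \<in> {1..<p}"
    then have "X (Suc i) - X i > 0" using X unfolding Rp_def by auto
    then show "((\<lambda>t. ((X(k:=t)) (Suc i) - (X(k:=t)) i) powr (1-m)) has_real_derivative
      dd (Suc i) i k (E m (X (Suc i) - X i))) (at (X k))"
      by (intro pair_deriv deriv_pos) auto
  qed
  have hB: "((\<lambda>t. \<Sum>i\<in>{1..p}. \<Sum>j\<in>{1..p}-{i}. \<bar>(X(k:=t)) i - (X(k:=t)) j\<bar> powr (1-m)) has_real_derivative
      (\<Sum>i\<in>{1..p}. \<Sum>j\<in>{1..p}-{i}. dd i j k (E m (X i - X j)))) (at (X k))"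
  proof (rule DERIV_sum, rule DERIV_sum)
    fix i j assume i: "i \<in> {1..p}" and j: "j \<in> {1..p}-{i}"
    then have "X i - X j \<noteq> 0" using Rp_neq[OF X, of i j] by auto
    moreover have "i \<noteq> j" using j by auto
    ultimately show "((\<lambda>t. \<bar>(X(k:=t)) i - (X(k:=t)) j\<bar> powr (1-m)) has_real_derivative
      dd i j k (E m (X i - X j))) (at (X k))"
      by (intro pair_deriv deriv_abs) auto
  qed
  have hC: "((\<lambda>t. \<Sum>i=1..p. ((X(k:=t)) i)\<^sup>2) has_real_derivative
      (\<Sum>i=1..p. if i = k then 2 * X k else 0)) (at (X k))"
  proof (rule DERIV_sum)
    fix i assume i: "i \<in> {1..p}"
    show "((\<lambda>t. ((X(k:=t)) i)\<^sup>2) has_real_derivative (if i = k then 2 * X k else 0)) (at (X k))"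
    proof (cases "i = k")
      case True
      then show ?thesis by (auto intro!: derivative_eq_intros)
    next
      case False
      then show ?thesis by simp
    qed
  qed
  have sC: "(\<Sum>i=1..p. if i = k then 2 * X k else 0) = 2 * X k" using k by simp
  have "((\<lambda>t. Fma m chi \<alpha> p (X(k:=t))) has_real_derivative
     (1/(m-1) * (\<Sum>i=1..<p. dd (Suc i) i k (E m (X (Suc i) - X i)))
      - chi/(m-1) * (\<Sum>i\<in>{1..p}. \<Sum>j\<in>{1..p}-{i}. dd i j k (E m (X i - X j)))
      + \<alpha> * (\<Sum>i=1..p. if i = k then 2 * X k else 0) / 2)) (at (X k))"
    unfolding Fma_def
    by (intro DERIV_add DERIV_diff DERIV_cmult DERIV_cdivide hA hB hC)
  then show ?thesis using sC by simp
qed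



lemma tangent_powr:
  fixes t q :: real
  assumes t: "t > 0" and q: "q < 0"
  shows "1 + q * (t - 1) \<le> t powr q"
proof -
  define a where "a = 1 / (1 - q)"
  define b where "b = - q / (1 - q)"
  have ab: "0 \<le> a" "0 \<le> b" "a + b = 1" using q by (auto simp: a_def b_def field_simps)
  have s: "t powr q > 0" using t by simp
  have "(t powr q) powr a * t powr b \<le> a * t powr q + b * t"
    by (rule Youngs_inequality_0[OF ab s t])
  moreover have "(t powr q) powr a * t powr b = 1"
  proof -
    have "(t powr q) powr a * t powr b = t powr (q * a + b)"
      by (simp add: powr_powr powr_add)
    also have "q * a + b = 0" using q by (simp add: a_def b_def field_simps)
    finally show ?thesis using t by simp
  qed
  ultimately have "1 \<le> a * t powr q + b * t" by simp
  then have "(1 - q) * 1 \<le> (1 - q) * (a * t powr q + b * t)"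
    using q by (intro mult_left_mono) auto
  also have "(1 - q) * (a * t powr q + b * t) = ((1-q)*a) * t powr q + ((1-q)*b) * t"
    by (simp add: algebra_simps)
  also have "(1-q)*a = 1" using q by (simp add: a_def)
  also have "(1-q)*b = -q" using q by (simp add: b_def)
  finally show ?thesis by (simp add: algebra_simps)
qed

lemma jensen_pair:
  fixes h g :: "nat \<Rightarrow> real" and m :: real
  assumes S: "finite S" "S \<noteq> {}" and pos: "\<And>l. l \<in> S \<Longrightarrow> h l > 0 \<and> g l > 0" and m: "m > 1"
  shows "(sum g S) powr (1-m) \<le> (\<Sum>l\<in>S. h l powr m * g l powr (1-m)) * (sum h S) powr (1-m) / sum h S"
proof -
  define q where "q = 1 - m"
  define D where "D = sum h S"
  define G where "G = sum g S"
  have q: "q < 0" using m by (simp add: q_def)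
  have D: "D > 0" unfolding D_def using S pos by (intro sum_pos) auto
  have G: "G > 0" unfolding G_def using S pos by (intro sum_pos) auto
  have key: "h l + q * (g l * D / G - h l) \<le> h l powr m * g l powr q * (D powr q / G powr q)"
    if l: "l \<in> S" for l
  proof -
    have hl: "h l > 0" and gl: "g l > 0" using pos[OF l] by auto
    have t: "g l * D / (h l * G) > 0" using hl gl D G by simp
    have "h l * (1 + q * (g l * D / (h l * G) - 1)) \<le> h l * (g l * D / (h l * G)) powr q"
      using tangent_powr[OF t q] hl by (intro mult_left_mono) auto
    also have "(g l * D / (h l * G)) powr q = (g l powr q * D powr q) / (h l powr q * G powr q)"
      using hl gl D G by (simp add: powr_divide powr_mult)
    also have "h l * ((g l powr q * D powr q) / (h l powr q * G powr q))
        = (h l / h l powr q) * g l powr q * (D powr q / G powr q)" by simp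
    also have "h l / h l powr q = h l powr m"
    proof -
      have "h l powr m = h l powr (1 - q)" by (simp add: q_def)
      also have "\<dots> = h l powr 1 / h l powr q" by (rule powr_diff)
      finally show ?thesis using hl by simp
    qed
    also have "h l * (1 + q * (g l * D / (h l * G) - 1)) = h l + q * (g l * D / G - h l)"
      using hl G by (simp add: field_simps)
    finally show ?thesis by simp
  qed
  have "(\<Sum>l\<in>S. h l + q * (g l * D / G - h l)) \<le> (\<Sum>l\<in>S. h l powr m * g l powr q * (D powr q / G powr q))"
    by (rule sum_mono) (rule key)
  moreover have "(\<Sum>l\<in>S. h l + q * (g l * D / G - h l)) = D"
  proof -
    have "(\<Sum>l\<in>S. h l + q * (g l * D / G - h l)) = D + q * (G * D / G - D)"
      by (simp add: sum.distrib sum_subtractf sum_distrib_left[symmetric] sum_divide_distrib[symmetric]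
            sum_distrib_right[symmetric] D_def G_def)
    then show ?thesis using G by simp
  qed
  moreover have "(\<Sum>l\<in>S. h l powr m * g l powr q * (D powr q / G powr q))
      = (\<Sum>l\<in>S. h l powr m * g l powr q) * (D powr q / G powr q)"
    by (rule sum_distrib_right[symmetric])
  ultimately have ineq: "D \<le> (\<Sum>l\<in>S. h l powr m * g l powr q) * (D powr q / G powr q)" by simp
  have "G powr q * D \<le> (\<Sum>l\<in>S. h l powr m * g l powr q) * D powr q"
  proof -
    have "G powr q * D \<le> G powr q * ((\<Sum>l\<in>S. h l powr m * g l powr q) * (D powr q / G powr q))"
      using ineq G by (intro mult_left_mono) auto
    also have "\<dots> = (\<Sum>l\<in>S. h l powr m * g l powr q) * D powr q" using G by simp
    finally show ?thesis .
  qed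
  then have "G powr q \<le> (\<Sum>l\<in>S. h l powr m * g l powr q) * D powr q / D"
    using D by (simp add: field_simps)
  then show ?thesis by (simp add: q_def D_def G_def)
qed



definition AA :: "real \<Rightarrow> nat \<Rightarrow> (nat \<Rightarrow> real) \<Rightarrow> real" where
  "AA m p Y = (\<Sum>i=1..<p. (Y (Suc i) - Y i) powr (1-m))"
definition BB :: "real \<Rightarrow> nat \<Rightarrow> (nat \<Rightarrow> real) \<Rightarrow> real" where
  "BB m p Y = (\<Sum>i\<in>{1..p}. \<Sum>j\<in>{1..p}-{i}. \<bar>Y i - Y j\<bar> powr (1-m))"
definition WW :: "real \<Rightarrow> (nat \<Rightarrow> real) \<Rightarrow> (nat \<Rightarrow> real) \<Rightarrow> nat \<Rightarrow> real" where
  "WW m X Y k = (\<Sum>l\<in>{1..<k}. (X (Suc l) - X l) powr m * (Y (Suc l) - Y l) powr (1-m))"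
definition PP :: "real \<Rightarrow> (nat \<Rightarrow> real) \<Rightarrow> (nat \<Rightarrow> real) \<Rightarrow> nat \<Rightarrow> nat \<Rightarrow> real" where
  "PP m X Y i j = (WW m X Y i - WW m X Y j) * \<bar>X i - X j\<bar> powr (1-m) / (X i - X j)"

lemma sum_dd:
  assumes "a \<in> {1..p}" "b \<in> {1..p}" "a \<noteq> b"
  shows "(\<Sum>k\<in>{1..p}. W k * dd a b k D) = (W a - W b) * D"
proof -
  have "\<And>k. W k * dd a b k D = (if k = a then W k * D else 0) - (if k = b then W k * D else 0)"
    using assms(3) by (simp add: dd_def)
  then have "(\<Sum>k\<in>{1..p}. W k * dd a b k D)
      = (\<Sum>k\<in>{1..p}. if k = a then W k * D else 0) - (\<Sum>k\<in>{1..p}. if k = b then W k * D else 0)"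
    by (simp add: sum_subtractf)
  also have "\<dots> = W a * D - W b * D" using assms by simp
  finally show ?thesis by (simp add: algebra_simps)
qed

lemma crit_DF:
  assumes c: "critical_point m chi \<alpha> p X" and k: "k \<in> {1..p}"
  shows "1/(m-1) * (\<Sum>i=1..<p. dd (Suc i) i k (E m (X (Suc i) - X i)))
      - chi/(m-1) * (\<Sum>i\<in>{1..p}. \<Sum>j\<in>{1..p}-{i}. dd i j k (E m (X i - X j)))
      + \<alpha> * X k = 0"
proof -
  have X: "X \<in> Rp p" using c unfolding critical_point_def by simp
  have "((\<lambda>t. Fma m chi \<alpha> p (X(k:=t))) has_real_derivative 0) (at (X k))"
    using c k unfolding critical_point_def by simp
  from DERIV_unique[OF Fma_deriv[OF X k] this] show ?thesis .
qed

lemma weighted: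
  assumes c: "critical_point m chi \<alpha> p X"
  shows "1/(m-1) * (\<Sum>i=1..<p. (W (Suc i) - W i) * E m (X (Suc i) - X i))
      - chi/(m-1) * (\<Sum>i\<in>{1..p}. \<Sum>j\<in>{1..p}-{i}. (W i - W j) * E m (X i - X j))
      + \<alpha> * (\<Sum>k\<in>{1..p}. W k * X k) = 0"
proof -
  define f where "f k = (\<Sum>i=1..<p. dd (Suc i) i k (E m (X (Suc i) - X i)))" for k
  define g where "g k = (\<Sum>i\<in>{1..p}. \<Sum>j\<in>{1..p}-{i}. dd i j k (E m (X i - X j)))" for k
  have z: "(\<Sum>k\<in>{1..p}. W k * (1/(m-1) * f k - chi/(m-1) * g k + \<alpha> * X k)) = 0"
    using crit_DF[OF c] unfolding f_def g_def by simp
  have "(\<Sum>k\<in>{1..p}. W k * (1/(m-1) * f k - chi/(m-1) * g k + \<alpha> * X k))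
     = 1/(m-1) * (\<Sum>k\<in>{1..p}. W k * f k) - chi/(m-1) * (\<Sum>k\<in>{1..p}. W k * g k)
       + \<alpha> * (\<Sum>k\<in>{1..p}. W k * X k)"
    by (simp add: algebra_simps sum.distrib sum_subtractf sum_distrib_left)
  also have "(\<Sum>k\<in>{1..p}. W k * f k) = (\<Sum>i=1..<p. (W (Suc i) - W i) * E m (X (Suc i) - X i))"
  proof -
    have "(\<Sum>k\<in>{1..p}. W k * f k) = (\<Sum>k\<in>{1..p}. \<Sum>i=1..<p. W k * dd (Suc i) i k (E m (X (Suc i) - X i)))"
      unfolding f_def by (simp add: sum_distrib_left)
    also have "\<dots> = (\<Sum>i=1..<p. \<Sum>k\<in>{1..p}. W k * dd (Suc i) i k (E m (X (Suc i) - X i)))"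
      by (rule sum.swap)
    also have "\<dots> = (\<Sum>i=1..<p. (W (Suc i) - W i) * E m (X (Suc i) - X i))"
      by (rule sum.cong[OF refl], rule sum_dd) auto
    finally show ?thesis .
  qed
  also have "(\<Sum>k\<in>{1..p}. W k * g k) = (\<Sum>i\<in>{1..p}. \<Sum>j\<in>{1..p}-{i}. (W i - W j) * E m (X i - X j))"
  proof -
    have "(\<Sum>k\<in>{1..p}. W k * g k) = (\<Sum>k\<in>{1..p}. \<Sum>i\<in>{1..p}. \<Sum>j\<in>{1..p}-{i}. W k * dd i j k (E m (X i - X j)))"
      unfolding g_def by (simp add: sum_distrib_left)
    also have "\<dots> = (\<Sum>i\<in>{1..p}. \<Sum>k\<in>{1..p}. \<Sum>j\<in>{1..p}-{i}. W k * dd i j k (E m (X i - X j)))"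
      by (rule sum.swap)
    also have "\<dots> = (\<Sum>i\<in>{1..p}. \<Sum>j\<in>{1..p}-{i}. \<Sum>k\<in>{1..p}. W k * dd i j k (E m (X i - X j)))"
      by (rule sum.cong[OF refl], rule sum.swap)
    also have "\<dots> = (\<Sum>i\<in>{1..p}. \<Sum>j\<in>{1..p}-{i}. (W i - W j) * E m (X i - X j))"
      by (rule sum.cong[OF refl], rule sum.cong[OF refl], rule sum_dd) auto
    finally show ?thesis .
  qed
  finally show ?thesis using z by simp
qed



lemma W_Suc:
  assumes "1 \<le> i"
  shows "WW m X Y (Suc i) - WW m X Y i = (X (Suc i) - X i) powr m * (Y (Suc i) - Y i) powr (1-m)"
  using assms unfolding WW_def by (simp add: sum.atLeastLessThan_Suc)

lemma A_term:
  assumes m: "m > 1" and X: "X \<in> Rp p" and i: "i \<in> {1..<p}"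
  shows "1/(m-1) * ((WW m X Y (Suc i) - WW m X Y i) * E m (X (Suc i) - X i)) = - ((Y (Suc i) - Y i) powr (1-m))"
proof -
  define h where "h = X (Suc i) - X i"
  define g where "g = (Y (Suc i) - Y i) powr (1-m)"
  have h: "h > 0" using X i unfolding Rp_def h_def by auto
  have hh: "h powr m * h powr (1-m) / h = 1" using h by (simp add: powr_add[symmetric])
  have "1/(m-1) * (h powr m * g * ((1-m) * h powr (1-m) / h)) = ((1-m)/(m-1)) * g * (h powr m * h powr (1-m) / h)"
    by (simp add: mult_ac)
  also have "\<dots> = ((1-m)/(m-1)) * g" using hh by simp
  also have "(1-m)/(m-1) = -1" using m by (simp add: field_simps)
  also have "-1 * g = - g" by simp
  finally have key: "1/(m-1) * (h powr m * g * ((1-m) * h powr (1-m) / h)) = - g" .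
  show ?thesis using W_Suc[of i m X Y] i key
    by (simp add: E_def h_def[symmetric] g_def[symmetric] abs_of_pos[OF h])
qed

lemma B_term:
  assumes m: "m > 1" and ne: "X i \<noteq> X j"
  shows "- (chi/(m-1)) * ((WW m X Y i - WW m X Y j) * E m (X i - X j)) = chi * PP m X Y i j"
proof -
  have k: "-(chi/(m-1))*(1-m) = chi" using m by (simp add: field_simps)
  have "- (chi/(m-1)) * ((WW m X Y i - WW m X Y j) * ((1-m) * \<bar>X i - X j\<bar> powr (1-m) / (X i - X j)))
    = (-(chi/(m-1))*(1-m)) * ((WW m X Y i - WW m X Y j) * \<bar>X i - X j\<bar> powr (1-m) / (X i - X j))"
    by (simp add: mult_ac)
  then show ?thesis unfolding PP_def E_def k .
qed

lemma WW_diff: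
  assumes "1 \<le> j" "j \<le> i"
  shows "WW m X Y i - WW m X Y j = (\<Sum>l\<in>{j..<i}. (X (Suc l) - X l) powr m * (Y (Suc l) - Y l) powr (1-m))"
proof -
  have "WW m X Y i = WW m X Y j + (\<Sum>l\<in>{j..<i}. (X (Suc l) - X l) powr m * (Y (Suc l) - Y l) powr (1-m))"
    unfolding WW_def using assms by (simp add: sum.atLeastLessThan_concat)
  then show ?thesis by simp
qed

lemma P_ge_lt:
  assumes m: "m > 1" and X: "X \<in> Rp p" and Y: "Y \<in> Rp p"
    and ji: "1 \<le> j" "j < i" "i \<le> p"
  shows "\<bar>Y i - Y j\<bar> powr (1-m) \<le> PP m X Y i j"
proof -
  have pos: "\<And>l. l \<in> {j..<i} \<Longrightarrow> X (Suc l) - X l > 0 \<and> Y (Suc l) - Y l > 0"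
    using X Y ji unfolding Rp_def by auto
  have J: "(\<Sum>l\<in>{j..<i}. Y (Suc l) - Y l) powr (1-m)
     \<le> (\<Sum>l\<in>{j..<i}. (X (Suc l) - X l) powr m * (Y (Suc l) - Y l) powr (1-m))
        * (\<Sum>l\<in>{j..<i}. X (Suc l) - X l) powr (1-m) / (\<Sum>l\<in>{j..<i}. X (Suc l) - X l)"
    by (rule jensen_pair[where h="\<lambda>l. X (Suc l) - X l" and g="\<lambda>l. Y (Suc l) - Y l", OF _ _ pos m]) (use ji in auto)
  have sX: "(\<Sum>l\<in>{j..<i}. X (Suc l) - X l) = X i - X j" using ji by (simp add: sum_Suc_diff')
  have sY: "(\<Sum>l\<in>{j..<i}. Y (Suc l) - Y l) = Y i - Y j" using ji by (simp add: sum_Suc_diff')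
  have xi: "X j < X i" using Rp_strict[OF X ji] .
  have yi: "Y j < Y i" using Rp_strict[OF Y ji] .
  show ?thesis using J unfolding PP_def WW_diff[OF ji(1) less_imp_le[OF ji(2)]] sX sY
    using xi yi by simp
qed

lemma P_sym: "PP m X Y i j = PP m X Y j i"
  unfolding PP_def
  by (cases "X i = X j") (simp_all add: abs_minus_commute field_simps)

lemma P_ge:
  assumes m: "m > 1" and X: "X \<in> Rp p" and Y: "Y \<in> Rp p"
    and ij: "i \<in> {1..p}" "j \<in> {1..p}" "i \<noteq> j"
  shows "\<bar>Y i - Y j\<bar> powr (1-m) \<le> PP m X Y i j"
proof (cases "j < i")
  case True then show ?thesis using P_ge_lt[OF m X Y, of j i] ij by auto
next
  case False then have "i < j" using ij by simp
  then have "\<bar>Y j - Y i\<bar> powr (1-m) \<le> PP m X Y j i" using P_ge_lt[OF m X Y, of i j] ij by auto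
  then show ?thesis by (simp add: abs_minus_commute P_sym)
qed

lemma WW_self:
  assumes X: "X \<in> Rp p" and k: "1 \<le> k" "k \<le> p"
  shows "WW m X X k = X k - X 1"
proof -
  have "WW m X X k = (\<Sum>l\<in>{1..<k}. X (Suc l) - X l)"
    unfolding WW_def
  proof (rule sum.cong[OF refl])
    fix l assume l: "l \<in> {1..<k}"
    then have h: "X (Suc l) - X l > 0" using X k unfolding Rp_def by auto
    show "(X (Suc l) - X l) powr m * (X (Suc l) - X l) powr (1-m) = X (Suc l) - X l"
      using h by (simp add: powr_add[symmetric])
  qed
  also have "\<dots> = X k - X 1" using k by (simp add: sum_Suc_diff')
  finally show ?thesis .
qed

lemma P_eq:
  assumes X: "X \<in> Rp p" and ij: "i \<in> {1..p}" "j \<in> {1..p}" "i \<noteq> j"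
  shows "PP m X X i j = \<bar>X i - X j\<bar> powr (1-m)"
proof -
  have ne: "X i - X j \<noteq> 0" using Rp_neq[OF X ij] by simp
  show ?thesis unfolding PP_def using WW_self[OF X, of i m] WW_self[OF X, of j m] ij ne by auto
qed



lemma main_eq:
  assumes m: "m > 1" and c: "critical_point m chi \<alpha> p X" and Y: "Y \<in> Rp p"
  shows "AA m p Y = chi * (\<Sum>i\<in>{1..p}. \<Sum>j\<in>{1..p}-{i}. PP m X Y i j) + \<alpha> * (\<Sum>k\<in>{1..p}. WW m X Y k * X k)"
proof -
  have X: "X \<in> Rp p" using c unfolding critical_point_def by simp
  have w: "1/(m-1) * (\<Sum>i=1..<p. (WW m X Y (Suc i) - WW m X Y i) * E m (X (Suc i) - X i))
      - chi/(m-1) * (\<Sum>i\<in>{1..p}. \<Sum>j\<in>{1..p}-{i}. (WW m X Y i - WW m X Y j) * E m (X i - X j))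
      + \<alpha> * (\<Sum>k\<in>{1..p}. WW m X Y k * X k) = 0"
    by (rule weighted[OF c])
  have a: "1/(m-1) * (\<Sum>i=1..<p. (WW m X Y (Suc i) - WW m X Y i) * E m (X (Suc i) - X i)) = - AA m p Y"
  proof -
    have "1/(m-1) * (\<Sum>i=1..<p. (WW m X Y (Suc i) - WW m X Y i) * E m (X (Suc i) - X i))
       = (\<Sum>i=1..<p. 1/(m-1) * ((WW m X Y (Suc i) - WW m X Y i) * E m (X (Suc i) - X i)))"
      by (simp add: sum_distrib_left)
    also have "\<dots> = (\<Sum>i=1..<p. - ((Y (Suc i) - Y i) powr (1-m)))"
      by (rule sum.cong[OF refl], rule A_term[OF m X]) simp
    finally show ?thesis unfolding AA_def by (simp add: sum_negf)
  qed
  have b: "- (chi/(m-1)) * (\<Sum>i\<in>{1..p}. \<Sum>j\<in>{1..p}-{i}. (WW m X Y i - WW m X Y j) * E m (X i - X j))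
     = chi * (\<Sum>i\<in>{1..p}. \<Sum>j\<in>{1..p}-{i}. PP m X Y i j)"
  proof -
    have "- (chi/(m-1)) * (\<Sum>i\<in>{1..p}. \<Sum>j\<in>{1..p}-{i}. (WW m X Y i - WW m X Y j) * E m (X i - X j))
      = (\<Sum>i\<in>{1..p}. \<Sum>j\<in>{1..p}-{i}. - (chi/(m-1)) * ((WW m X Y i - WW m X Y j) * E m (X i - X j)))"
      by (simp add: sum_distrib_left)
    also have "\<dots> = (\<Sum>i\<in>{1..p}. \<Sum>j\<in>{1..p}-{i}. chi * PP m X Y i j)"
      by (rule sum.cong[OF refl], rule sum.cong[OF refl], rule B_term[OF m], rule Rp_neq[OF X]) auto
    finally show ?thesis by (simp add: sum_distrib_left)
  qed
  show ?thesis using w a b by simp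
qed

lemma AA_pos:
  assumes Y: "Y \<in> Rp p" and p: "p \<ge> 2"
  shows "AA m p Y > 0"
  unfolding AA_def
proof (rule sum_pos)
  show "finite {1..<p}" by simp
  show "{1..<p} \<noteq> {}" using p by auto
  fix i assume "i \<in> {1..<p}"
  then have "Y (Suc i) - Y i > 0" using Y unfolding Rp_def by auto
  then show "(Y (Suc i) - Y i) powr (1-m) > 0" by simp
qed

lemma BB_pos:
  assumes Y: "Y \<in> Rp p" and p: "p \<ge> 2"
  shows "BB m p Y > 0"
  unfolding BB_def
proof (rule sum_pos)
  show "finite {1..p}" by simp
  show "{1..p} \<noteq> {}" using p by auto
  fix i assume i: "i \<in> {1..p}"
  show "(\<Sum>j\<in>{1..p}-{i}. \<bar>Y i - Y j\<bar> powr (1-m)) > 0"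
  proof (rule sum_pos)
    show "finite ({1..p}-{i})" by simp
    have "(if i = 1 then 2 else 1) \<in> {1..p}-{i}" using p by auto
    then show "{1..p}-{i} \<noteq> {}" by blast
    fix j assume j: "j \<in> {1..p}-{i}"
    then have "Y i \<noteq> Y j" using Rp_neq[OF Y i, of j] by auto
    then show "\<bar>Y i - Y j\<bar> powr (1-m) > 0" by simp
  qed
qed

lemma tail_pos:
  assumes X: "X \<in> Rp p" and l: "1 \<le> l" "l < p"
  shows "(\<Sum>k\<in>{Suc l..p}. X k) > 0"
proof -
  have split: "{1..p} = {1..l} \<union> {Suc l..p}" using l by auto
  have tot: "(\<Sum>k\<in>{1..l}. X k) + (\<Sum>k\<in>{Suc l..p}. X k) = 0"
    using X unfolding Rp_def split by (subst sum.union_disjoint[symmetric]) auto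
  show ?thesis
  proof (cases "X (Suc l) > 0")
    case True
    show ?thesis
    proof (rule sum_pos)
      show "finite {Suc l..p}" by simp
      show "{Suc l..p} \<noteq> {}" using l by auto
      fix k assume k: "k \<in> {Suc l..p}"
      show "X k > 0"
      proof (cases "k = Suc l")
        case True then show ?thesis using \<open>X (Suc l) > 0\<close> by simp
      next
        case False
        then have "X (Suc l) < X k" using Rp_strict[OF X, of "Suc l" k] k by auto
        then show ?thesis using \<open>X (Suc l) > 0\<close> by simp
      qed
    qed
  next
    case False
    have "(\<Sum>k\<in>{1..l}. X k) < (\<Sum>k\<in>{1..l}. 0)"
    proof (rule sum_strict_mono)
      show "finite {1..l}" by simp
      show "{1..l} \<noteq> {}" using l by auto
      fix k assume k: "k \<in> {1..l}"
      have "X k < X (Suc l)" using Rp_strict[OF X, of k "Suc l"] k l by auto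
      then show "X k < 0" using False by simp
    qed
    then show ?thesis using tot by simp
  qed
qed

lemma S_ge:
  assumes m: "m > 1" and X: "X \<in> Rp p" and Y: "Y \<in> Rp p" and p: "p \<ge> 2"
  defines "\<delta> \<equiv> Min ((\<lambda>l. (X (Suc l) - X l) powr m * (\<Sum>k\<in>{Suc l..p}. X k)) ` {1..<p})"
  shows "\<delta> > 0" and "(\<Sum>k\<in>{1..p}. WW m X Y k * X k) \<ge> \<delta> * AA m p Y"
proof -
  define c where "c l = (X (Suc l) - X l) powr m * (Y (Suc l) - Y l) powr (1-m)" for l
  show dpos: "\<delta> > 0" unfolding \<delta>_def
  proof (subst Min_gr_iff)
    show "finite ((\<lambda>l. (X (Suc l) - X l) powr m * (\<Sum>k\<in>{Suc l..p}. X k)) ` {1..<p})" by simp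
    show "(\<lambda>l. (X (Suc l) - X l) powr m * (\<Sum>k\<in>{Suc l..p}. X k)) ` {1..<p} \<noteq> {}" using p by auto
    show "\<forall>a\<in>(\<lambda>l. (X (Suc l) - X l) powr m * (\<Sum>k\<in>{Suc l..p}. X k)) ` {1..<p}. 0 < a"
    proof
      fix a assume "a \<in> (\<lambda>l. (X (Suc l) - X l) powr m * (\<Sum>k\<in>{Suc l..p}. X k)) ` {1..<p}"
      then obtain l where l: "l \<in> {1..<p}" and a: "a = (X (Suc l) - X l) powr m * (\<Sum>k\<in>{Suc l..p}. X k)" by auto
      have "X (Suc l) - X l > 0" using X l unfolding Rp_def by auto
      moreover have "(\<Sum>k\<in>{Suc l..p}. X k) > 0" using tail_pos[OF X] l by auto
      ultimately show "0 < a" unfolding a by simp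
    qed
  qed
  have "(\<Sum>k\<in>{1..p}. WW m X Y k * X k) = (\<Sum>k\<in>{1..p}. \<Sum>l\<in>{l. l \<in> {1..<p} \<and> l < k}. c l * X k)"
  proof (rule sum.cong[OF refl])
    fix k assume k: "k \<in> {1..p}"
    have "{l. l \<in> {1..<p} \<and> l < k} = {1..<k}" using k by auto
    then show "WW m X Y k * X k = (\<Sum>l\<in>{l. l \<in> {1..<p} \<and> l < k}. c l * X k)"
      unfolding WW_def c_def by (simp add: sum_distrib_right)
  qed
  also have "\<dots> = (\<Sum>l\<in>{1..<p}. \<Sum>k\<in>{k. k \<in> {1..p} \<and> l < k}. c l * X k)"
    by (rule sum.swap_restrict) auto
  also have "\<dots> = (\<Sum>l\<in>{1..<p}. c l * (\<Sum>k\<in>{Suc l..p}. X k))"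
  proof (rule sum.cong[OF refl])
    fix l assume l: "l \<in> {1..<p}"
    have "{k. k \<in> {1..p} \<and> l < k} = {Suc l..p}" using l by auto
    then show "(\<Sum>k\<in>{k. k \<in> {1..p} \<and> l < k}. c l * X k) = c l * (\<Sum>k\<in>{Suc l..p}. X k)"
      by (simp add: sum_distrib_left)
  qed
  also have "\<dots> \<ge> (\<Sum>l\<in>{1..<p}. \<delta> * (Y (Suc l) - Y l) powr (1-m))"
  proof (rule sum_mono)
    fix l assume l: "l \<in> {1..<p}"
    have "\<delta> \<le> (X (Suc l) - X l) powr m * (\<Sum>k\<in>{Suc l..p}. X k)"
      unfolding \<delta>_def using l by (intro Min_le) auto
    moreover have "(Y (Suc l) - Y l) powr (1-m) \<ge> 0" by simp
    ultimately have "\<delta> * (Y (Suc l) - Y l) powr (1-m)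
        \<le> ((X (Suc l) - X l) powr m * (\<Sum>k\<in>{Suc l..p}. X k)) * (Y (Suc l) - Y l) powr (1-m)"
      by (rule mult_right_mono)
    then show "\<delta> * (Y (Suc l) - Y l) powr (1-m) \<le> c l * (\<Sum>k\<in>{Suc l..p}. X k)"
      unfolding c_def by (simp add: mult_ac)
  qed
  finally show "(\<Sum>k\<in>{1..p}. WW m X Y k * X k) \<ge> \<delta> * AA m p Y"
    unfolding AA_def by (simp add: sum_distrib_left)
qed



lemma Cp_alt: "Cp m p = 1 / (SUP Y\<in>Rp p. BB m p Y / AA m p Y)"
proof -
  have "\<And>Y. (\<Sum>i\<in>{1..p}. \<Sum>j\<in>{1..p} - {i}. \<bar>Y j - Y i\<bar> powr (1 - m)) = BB m p Y"
    unfolding BB_def by (simp add: abs_minus_commute)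
  then show ?thesis unfolding Cp_def AA_def by simp
qed

lemma crit_consequence:
  assumes m: "m > 1" and chi: "chi > 0" and a: "\<alpha> \<ge> 0" and p: "p \<ge> 2"
    and c: "critical_point m chi \<alpha> p X"
  shows "(\<alpha> = 0 \<longrightarrow> Cp m p = chi) \<and> (\<alpha> > 0 \<longrightarrow> Cp m p > chi)"
proof -
  have X: "X \<in> Rp p" using c unfolding critical_point_def by simp
  define R where "R Y = BB m p Y / AA m p Y" for Y
  define SS where "SS = (SUP Y\<in>Rp p. R Y)"
  have Cp: "Cp m p = 1 / SS" unfolding Cp_alt SS_def R_def ..
  have ne: "Rp p \<noteq> {}" using X by auto
  have ineq: "AA m p Y \<ge> chi * BB m p Y + \<alpha> * (\<Sum>k\<in>{1..p}. WW m X Y k * X k)" if Y: "Y \<in> Rp p" for Y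
  proof -
    have "BB m p Y \<le> (\<Sum>i\<in>{1..p}. \<Sum>j\<in>{1..p}-{i}. PP m X Y i j)"
      unfolding BB_def by (intro sum_mono P_ge[OF m X Y]) auto
    then have "chi * BB m p Y \<le> chi * (\<Sum>i\<in>{1..p}. \<Sum>j\<in>{1..p}-{i}. PP m X Y i j)"
      using chi by simp
    then show ?thesis using main_eq[OF m c Y] by simp
  qed
  have eqX: "AA m p X = chi * BB m p X + \<alpha> * (\<Sum>k\<in>{1..p}. WW m X X k * X k)"
  proof -
    have "(\<Sum>i\<in>{1..p}. \<Sum>j\<in>{1..p}-{i}. PP m X X i j) = BB m p X"
      unfolding BB_def by (intro sum.cong refl P_eq[OF X]) auto
    then show ?thesis using main_eq[OF m c X] by simp
  qed
  have Apos: "\<And>Y. Y \<in> Rp p \<Longrightarrow> AA m p Y > 0" using AA_pos p by blast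
  have Bpos: "\<And>Y. Y \<in> Rp p \<Longrightarrow> BB m p Y > 0" using BB_pos p by blast
  have RX: "R X > 0" unfolding R_def using Apos[OF X] Bpos[OF X] by simp
  show ?thesis
  proof (intro conjI impI)
    assume a0: "\<alpha> = 0"
    have le: "R Y \<le> 1/chi" if Y: "Y \<in> Rp p" for Y
    proof -
      have "chi * BB m p Y \<le> AA m p Y" using ineq[OF Y] a0 by simp
      then show ?thesis unfolding R_def using Apos[OF Y] chi by (simp add: field_simps)
    qed
    have eq: "R X = 1/chi"
    proof -
      have "chi * BB m p X = AA m p X" using eqX a0 by simp
      then show ?thesis unfolding R_def using Apos[OF X] chi by (simp add: field_simps)
    qed
    have bdd: "bdd_above (R ` Rp p)" by (rule bdd_aboveI2[OF le])
    have "SS \<le> 1/chi" unfolding SS_def by (rule cSUP_least[OF ne le])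
    moreover have "SS \<ge> 1/chi" unfolding SS_def using cSUP_upper[OF X bdd] eq by simp
    ultimately have "SS = 1/chi" by simp
    then show "Cp m p = chi" using Cp by simp
  next
    assume apos: "\<alpha> > 0"
    define \<delta> where "\<delta> = Min ((\<lambda>l. (X (Suc l) - X l) powr m * (\<Sum>k\<in>{Suc l..p}. X k)) ` {1..<p})"
    have dpos: "\<delta> > 0" unfolding \<delta>_def by (rule S_ge(1)[OF m X X p])
    define \<kappa> where "\<kappa> = 1 - \<alpha> * \<delta>"
    have kap: "\<kappa> * AA m p Y \<ge> chi * BB m p Y" if Y: "Y \<in> Rp p" for Y
    proof -
      have "(\<Sum>k\<in>{1..p}. WW m X Y k * X k) \<ge> \<delta> * AA m p Y"
        unfolding \<delta>_def by (rule S_ge(2)[OF m X Y p])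
      then have "\<alpha> * (\<Sum>k\<in>{1..p}. WW m X Y k * X k) \<ge> \<alpha> * (\<delta> * AA m p Y)"
        using apos by (intro mult_left_mono) auto
      then show ?thesis using ineq[OF Y] unfolding \<kappa>_def by (simp add: algebra_simps)
    qed
    have kpos: "\<kappa> > 0"
    proof -
      have "\<kappa> * AA m p X > 0" using kap[OF X] Bpos[OF X] chi
        by (smt (verit) mult_pos_pos)
      then show ?thesis using Apos[OF X] by (simp add: zero_less_mult_iff)
    qed
    have k1: "\<kappa> < 1" unfolding \<kappa>_def using apos dpos by simp
    have le: "R Y \<le> \<kappa>/chi" if Y: "Y \<in> Rp p" for Y
      using kap[OF Y] Apos[OF Y] chi unfolding R_def by (simp add: field_simps)
    have bdd: "bdd_above (R ` Rp p)" by (rule bdd_aboveI2[OF le])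
    have "SS \<le> \<kappa>/chi" unfolding SS_def by (rule cSUP_least[OF ne le])
    moreover have "SS \<ge> R X" unfolding SS_def using cSUP_upper[OF X bdd] by simp
    ultimately have s1: "SS > 0" "chi * SS \<le> \<kappa>" using RX chi by (auto simp: field_simps)
    then have "chi * SS < 1" using k1 by simp
    then have "chi < 1 / SS" using s1(1) by (simp add: less_divide_eq)
    then show "Cp m p > chi" using Cp by simp
  qed
qed

theorem corollary3p5:
  fixes m chi \<alpha> :: real and p :: nat
  assumes "m > 1" and "chi > 0" and "\<alpha> > 0" and "p \<ge> 2"
  shows "(chi > Cp m p \<longrightarrow>
            (\<nexists>X. critical_point m chi 0 p X) \<and> (\<nexists>X. critical_point m chi \<alpha> p X))
       \<and> (chi < Cp m p \<longrightarrow> (\<nexists>X. critical_point m chi 0 p X))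
       \<and> (chi = Cp m p \<longrightarrow> (\<nexists>X. critical_point m chi \<alpha> p X))"
proof -
  have z: "Cp m p = chi" if "critical_point m chi 0 p X" for X
    using crit_consequence[OF assms(1,2) _ assms(4) that] by simp
  have a: "Cp m p > chi" if "critical_point m chi \<alpha> p X" for X
    using crit_consequence[OF assms(1,2) _ assms(4) that] assms(3) by simp
  show ?thesis using z a by force
qed


end
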